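(* Let $p$ be a positive integer, $H$ a graph, $T$ a complete rooted ternary tree and $V\subseteq V(T(H))$. Let $T_1,\dots,T_q$ be a minimal sequence of largest subtrees of $T$ with respect to $V$ lacking $p$, with corresponding sequence of sets $V_1,\dots,V_q$. Then $|OC(T_q,V_q)|\geq (|OC(T_1,V_1)|-p)/3$.
   Context: Complete rooted ternary tree: rooted tree, all root-leaf paths of equal length, every non-leaf vertex has exactly 3 children. Graph $T(H)$: for $V(H)=\{1,\dots,m\}$, vertices $v^i$ ($v\in V(T)$), each $\{v^1,\dots,v^m\}$ spanning a copy $H^v$ of $H$, plus edges $u^iv^i$ for $uv\in E(T)$; for a subtree $T'$, $T'(H)$ is the subgraph induced by the copies $H^v$, $v\in V(T')$. $OC(T,V)=\{u\in V(T): V(H^u)\cap V\neq\emptyset\}$. An immediate subtree of $T$ consists of a child of the root and all its descendants; it is largest w.r.t. $V$ if $|OC(T,V)\cap V(T')|$ is maximum among immediate subtrees. A sequence of largest subtrees: $T_1=T$, $V_1=V$, $T_{i+1}$ a largest immediate subtree of $T_i$ w.r.t. $V_i$, $V_{i+1}=V_i\cap V(T_{i+1}(H))$; $V_1,\dots,V_q$ is the corresponding sequence of sets. It is minimal lacking $p$ if $|OC(T_1,V_1)|-|OC(T_q,V_q)|\geq p$ and $|OC(T_1,V_1)|-|OC(T_{q-1},V_{q-1})|<p$. *)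

theory Defs
  imports Complex_Main
begin

text \<open>Complete rooted ternary tree of depth d: vertices are words over {0,1,2}
 of length at most d; the root is the empty word, the children of v are v@[c], c<3.\<close>

definition tern_verts :: "nat \<Rightarrow> nat list set" where
  "tern_verts d = {v. length v \<le> d \<and> set v \<subseteq> {0,1,2}}"

definition subtree_verts :: "nat \<Rightarrow> nat list \<Rightarrow> nat list set" where
  "subtree_verts d r = {v \<in> tern_verts d. \<exists>w. v = r @ w}"

definition is_graph_on :: "nat \<Rightarrow> (nat \<Rightarrow> nat \<Rightarrow> bool) \<Rightarrow> bool" where
  "is_graph_on m E \<longleftrightarrow> (\<forall>x y. E x y \<longrightarrow> x \<in> {1..m} \<and> y \<in> {1..m} \<and> x \<noteq> y \<and> E y x)"

text \<open>Vertex set of T'(H) for a subtree T' with vertex set S: vertex v^i is the pair (v,i).\<close>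
definition blowup_verts :: "nat list set \<Rightarrow> nat \<Rightarrow> (nat list \<times> nat) set" where
  "blowup_verts S m = S \<times> {1..m}"

definition OC :: "nat \<Rightarrow> nat list set \<Rightarrow> (nat list \<times> nat) set \<Rightarrow> nat list set" where
  "OC m S V = {u \<in> S. ({u} \<times> {1..m}) \<inter> V \<noteq> {}}"

text \<open>r 1, ..., r q are the roots of T_1, ..., T_q; Vs 1, ..., Vs q are V_1, ..., V_q.\<close>
definition largest_seq ::
  "nat \<Rightarrow> nat \<Rightarrow> (nat list \<times> nat) set \<Rightarrow> nat \<Rightarrow> (nat \<Rightarrow> nat list) \<Rightarrow> (nat \<Rightarrow> (nat list \<times> nat) set) \<Rightarrow> bool" where
  "largest_seq d m V q r Vs \<longleftrightarrow>
     q \<ge> 1 \<and> r 1 = [] \<and> Vs 1 = V \<and>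
     (\<forall>i. 1 \<le> i \<and> i < q \<longrightarrow>
        length (r i) < d \<and>
        (\<exists>c<3. r (Suc i) = r i @ [c]) \<and>
        (\<forall>c<3. card (OC m (subtree_verts d (r i)) (Vs i) \<inter> subtree_verts d (r i @ [c]))
               \<le> card (OC m (subtree_verts d (r i)) (Vs i) \<inter> subtree_verts d (r (Suc i)))) \<and>
        Vs (Suc i) = Vs i \<inter> blowup_verts (subtree_verts d (r (Suc i))) m)"

definition minimal_lacking ::
  "nat \<Rightarrow> nat \<Rightarrow> nat \<Rightarrow> nat \<Rightarrow> (nat \<Rightarrow> nat list) \<Rightarrow> (nat \<Rightarrow> (nat list \<times> nat) set) \<Rightarrow> bool" where
  "minimal_lacking p d m q r Vs \<longleftrightarrow>
     int (card (OC m (subtree_verts d (r 1)) (Vs 1))) - int (card (OC m (subtree_verts d (r q)) (Vs q))) \<ge> int p \<and>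
     int (card (OC m (subtree_verts d (r 1)) (Vs 1))) - int (card (OC m (subtree_verts d (r (q - 1))) (Vs (q - 1)))) < int p"

end

theory Submission
  imports Defs
begin

lemma fin_tern: "finite (tern_verts d)"
proof -
  have "tern_verts d = {xs. set xs \<subseteq> {0,1,2} \<and> length xs \<le> d}"
    unfolding tern_verts_def by auto
  then show ?thesis using finite_lists_length_le[of "{0::nat,1,2}" d] by simp
qed

lemma cardU: "card ({x} \<union> A \<union> B \<union> C) \<le> 1 + card A + card B + card C"
proof -
  have "card ({x} \<union> A \<union> B \<union> C) \<le> card ({x} \<union> A \<union> B) + card C" by (rule card_Un_le)
  moreover have "card ({x} \<union> A \<union> B) \<le> card ({x} \<union> A) + card B" by (rule card_Un_le)
  moreover have "card ({x} \<union> A) \<le> card {x} + card A" by (rule card_Un_le)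
  ultimately show ?thesis by simp
qed

lemma step:
  assumes "length (ri) < d" and "rn = ri @ [c0]" and "c0 < 3"
    and "\<forall>c<3. card (OC m (subtree_verts d ri) W \<inter> subtree_verts d (ri @ [c]))
               \<le> card (OC m (subtree_verts d ri) W \<inter> subtree_verts d rn)"
    and "W' = W \<inter> blowup_verts (subtree_verts d rn) m"
  shows "card (OC m (subtree_verts d ri) W) \<le> 1 + 3 * card (OC m (subtree_verts d rn) W')"
proof -
  let ?O = "OC m (subtree_verts d ri) W"
  let ?k = "card (?O \<inter> subtree_verts d rn)"
  have finO: "finite ?O" using fin_tern[of d]
    unfolding OC_def subtree_verts_def by (auto intro: finite_subset)
  have sub: "?O \<subseteq> {ri} \<union> (?O \<inter> subtree_verts d (ri@[0])) \<union> (?O \<inter> subtree_verts d (ri@[1]))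
        \<union> (?O \<inter> subtree_verts d (ri@[2]))"
  proof
    fix v assume v: "v \<in> ?O"
    then obtain w where w: "v = ri @ w" and vt: "v \<in> tern_verts d"
      unfolding OC_def subtree_verts_def by auto
    show "v \<in> {ri} \<union> (?O \<inter> subtree_verts d (ri@[0])) \<union> (?O \<inter> subtree_verts d (ri@[1]))
        \<union> (?O \<inter> subtree_verts d (ri@[2]))"
    proof (cases w)
      case Nil then show ?thesis using w by simp
    next
      case (Cons c w')
      have "c \<in> {0,1,2}" using vt w Cons unfolding tern_verts_def by auto
      then show ?thesis using v vt w Cons unfolding subtree_verts_def by auto
    qed
  qed
  have "card ?O \<le> card ({ri} \<union> (?O \<inter> subtree_verts d (ri@[0])) \<union> (?O \<inter> subtree_verts d (ri@[1]))
        \<union> (?O \<inter> subtree_verts d (ri@[2])))"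
    using sub finO by (intro card_mono) auto
  also have "\<dots> \<le> 1 + card (?O \<inter> subtree_verts d (ri@[0])) + card (?O \<inter> subtree_verts d (ri@[1]))
     + card (?O \<inter> subtree_verts d (ri@[2]))"
    by (rule cardU)
  also have "\<dots> \<le> 1 + 3 * ?k" using assms(4)
  proof -
    have "card (?O \<inter> subtree_verts d (ri@[0])) \<le> ?k" "card (?O \<inter> subtree_verts d (ri@[1])) \<le> ?k"
      "card (?O \<inter> subtree_verts d (ri@[2])) \<le> ?k" using assms(4) by simp_all
    then show ?thesis by linarith
  qed
  also have "?O \<inter> subtree_verts d rn = OC m (subtree_verts d rn) W'"
    using assms(2,5) unfolding OC_def subtree_verts_def blowup_verts_def by auto
  finally show ?thesis .
qed

lemma fin:
  assumes "(ai::nat) \<le> 1 + 3 * aq" "int a1 - int ai < int p"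
  shows "real aq \<ge> (real a1 - real p) / 3"
proof -
  have "int a1 - int p + 1 \<le> int ai" using assms(2) by linarith
  then have "int a1 - int p \<le> 3 * int aq" using assms(1) by linarith
  then have "real_of_int (int a1 - int p) \<le> real_of_int (3 * int aq)" by (simp only: of_int_le_iff)
  then have "real a1 - real p \<le> 3 * real aq" by simp
  then show ?thesis by simp
qed

theorem lemma5:
  fixes p d m q :: nat and E :: "nat \<Rightarrow> nat \<Rightarrow> bool"
    and V :: "(nat list \<times> nat) set"
    and r :: "nat \<Rightarrow> nat list" and Vs :: "nat \<Rightarrow> (nat list \<times> nat) set"
  assumes "p > 0"
    and "is_graph_on m E"
    and "V \<subseteq> blowup_verts (tern_verts d) m"
    and "largest_seq d m V q r Vs"
    and "minimal_lacking p d m q r Vs"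
  shows "real (card (OC m (subtree_verts d (r q)) (Vs q)))
           \<ge> (real (card (OC m (subtree_verts d (r 1)) (Vs 1))) - real p) / 3"
proof -
  have q2: "q \<ge> 2"
  proof (rule ccontr)
    assume "\<not> q \<ge> 2"
    moreover have "q \<ge> 1" using assms(4) unfolding largest_seq_def by blast
    ultimately have "q = 1" by simp
    then show False using assms(1,5) unfolding minimal_lacking_def by simp
  qed
  define i where "i = q - 1"
  have i: "1 \<le> i" "i < q" "Suc i = q" using q2 unfolding i_def by auto
  have all: "\<forall>i. 1 \<le> i \<and> i < q \<longrightarrow>
        length (r i) < d \<and> (\<exists>c<3. r (Suc i) = r i @ [c]) \<and>
        (\<forall>c<3. card (OC m (subtree_verts d (r i)) (Vs i) \<inter> subtree_verts d (r i @ [c]))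
               \<le> card (OC m (subtree_verts d (r i)) (Vs i) \<inter> subtree_verts d (r (Suc i)))) \<and>
        Vs (Suc i) = Vs i \<inter> blowup_verts (subtree_verts d (r (Suc i))) m"
    using assms(4) unfolding largest_seq_def by (elim conjE)
  have L: "length (r i) < d \<and> (\<exists>c<3. r (Suc i) = r i @ [c]) \<and>
        (\<forall>c<3. card (OC m (subtree_verts d (r i)) (Vs i) \<inter> subtree_verts d (r i @ [c]))
               \<le> card (OC m (subtree_verts d (r i)) (Vs i) \<inter> subtree_verts d (r (Suc i)))) \<and>
        Vs (Suc i) = Vs i \<inter> blowup_verts (subtree_verts d (r (Suc i))) m"
    using all i(1,2) by blast
  then obtain c where c: "c < 3" "r (Suc i) = r i @ [c]" by blast
  have st0: "card (OC m (subtree_verts d (r i)) (Vs i)) \<le> 1 + 3 * card (OC m (subtree_verts d (r (Suc i))) (Vs (Suc i)))"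
    apply (rule step[of "r i" d "r (Suc i)" c])
    using L c by simp_all
  have st: "card (OC m (subtree_verts d (r i)) (Vs i)) \<le> 1 + 3 * card (OC m (subtree_verts d (r q)) (Vs q))"
    using st0 i(3) by simp
  have ml: "int (card (OC m (subtree_verts d (r 1)) (Vs 1))) - int (card (OC m (subtree_verts d (r i)) (Vs i))) < int p"
    using assms(5) unfolding minimal_lacking_def i_def by auto
  show ?thesis using fin[OF st ml] .
qed

end
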